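(* Let $\hat{x}$ be the final value of the vector $x$ in Algorithm 1 and let $OPT$ be a set maximizing $f$ among subsets of $N$ of size at most $k$. If $\|\hat{x}\|_1<k$, then $F(\hat{x})\ge(1-p)\cdot\big[p\cdot f(OPT)+(1-p)\cdot f(OPT\setminus\mathrm{supp}(\hat{x}))\big]-c\tau$.
   Context: Setting: finite ground set $N$ whose elements arrive one at a time in a stream, non-negative submodular $f\colon 2^N\to\mathbb{R}_{\ge 0}$, positive integer $k$. $\mathbf{1}_A$ is the characteristic vector of $A$. $F$ is the multilinear extension of $f$: $F(x)=\sum_{A\subseteq N} f(A)\prod_{u\in A}x_u\prod_{u\notin A}(1-x_u)$ for $x\in[0,1]^N$, and $\partial_uF(x)=F(x\vee \mathbf{1}_u)-F(x\wedge\mathbf{1}_{N\setminus\{u\}})$ (coordinatewise max/min). $\mathrm{supp}(x)=\{u: x_u>0\}$. Algorithm 1 has parameters $p\in(0,1)$, $c>0$, $\alpha\in(0,1]$ and a number $\tau$. It starts with $x=\mathbf{0}$, and when an element $u$ arrives, if $\partial_uF(x)\ge c\tau/k$ it sets $x\leftarrow x+\min\{p,\,k-\|x\|_1\}\cdot\mathbf{1}_u$ (otherwise $x$ is unchanged). After the stream ends, it computes a random set $S_1$ with $|S_1|\le k$ and $\mathbb{E}[f(S_1)]\ge F(x)$, and a random set $S_2\subseteq\mathrm{supp}(x)$ with $|S_2|\le k$ and $\mathbb{E}[f(S_2)]\ge\alpha\cdot\max_{S\subseteq\mathrm{supp}(x),|S|\le k}f(S)$, and outputs the better of $S_1,S_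2$.
   Formalization: The parameter tau of Algorithm 1 is taken to be nonnegative (tau >= 0) rather than an arbitrary number. The paper assumes this as well. *)

theory Defs
  imports Complex_Main
begin

text \<open>Ground set N (finite), set function f on subsets of N, vectors x :: 'a \<Rightarrow> real
  (only coordinates in N matter).\<close>

definition submodular_on :: "'a set \<Rightarrow> ('a set \<Rightarrow> real) \<Rightarrow> bool" where
  "submodular_on N f \<longleftrightarrow>
     (\<forall>A B. A \<subseteq> N \<longrightarrow> B \<subseteq> N \<longrightarrow> f (A \<union> B) + f (A \<inter> B) \<le> f A + f B)"

definition nonneg_on :: "'a set \<Rightarrow> ('a set \<Rightarrow> real) \<Rightarrow> bool" where
  "nonneg_on N f \<longleftrightarrow> (\<forall>A. A \<subseteq> N \<longrightarrow> 0 \<le> f A)"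

definition multilinear_ext :: "'a set \<Rightarrow> ('a set \<Rightarrow> real) \<Rightarrow> ('a \<Rightarrow> real) \<Rightarrow> real" where
  "multilinear_ext N f x =
     (\<Sum>A\<in>Pow N. f A * (\<Prod>u\<in>A. x u) * (\<Prod>u\<in>N - A. 1 - x u))"

definition charvec :: "'a set \<Rightarrow> 'a \<Rightarrow> real" where
  "charvec A = (\<lambda>v. if v \<in> A then 1 else 0)"

definition partialF :: "'a set \<Rightarrow> ('a set \<Rightarrow> real) \<Rightarrow> ('a \<Rightarrow> real) \<Rightarrow> 'a \<Rightarrow> real" where
  "partialF N f x u =
     multilinear_ext N f (\<lambda>v. max (x v) (charvec {u} v))
   - multilinear_ext N f (\<lambda>v. min (x v) (charvec (N - {u}) v))"

definition norm1 :: "'a set \<Rightarrow> ('a \<Rightarrow> real) \<Rightarrow> real" where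
  "norm1 N x = (\<Sum>u\<in>N. \<bar>x u\<bar>)"

definition supp :: "'a set \<Rightarrow> ('a \<Rightarrow> real) \<Rightarrow> 'a set" where
  "supp N x = {u \<in> N. x u > 0}"

definition alg1_step ::
  "'a set \<Rightarrow> ('a set \<Rightarrow> real) \<Rightarrow> nat \<Rightarrow> real \<Rightarrow> real \<Rightarrow> real \<Rightarrow> ('a \<Rightarrow> real) \<Rightarrow> 'a \<Rightarrow> ('a \<Rightarrow> real)" where
  "alg1_step N f k p c \<tau> x u =
     (if partialF N f x u \<ge> c * \<tau> / real k
      then (\<lambda>v. x v + min p (real k - norm1 N x) * charvec {u} v)
      else x)"

definition alg1_final ::
  "'a set \<Rightarrow> ('a set \<Rightarrow> real) \<Rightarrow> nat \<Rightarrow> real \<Rightarrow> real \<Rightarrow> real \<Rightarrow> 'a list \<Rightarrow> ('a \<Rightarrow> real)" where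
  "alg1_final N f k p c \<tau> \<sigma> = foldl (alg1_step N f k p c \<tau>) (\<lambda>_. 0) \<sigma>"

end

theory Submission
  imports Defs
begin

definition EP :: "real \<Rightarrow> 'a set \<Rightarrow> ('a set \<Rightarrow> real) \<Rightarrow> real" where
 "EP p A g = (\<Sum>S\<in>Pow A. p ^ card S * (1-p) ^ card (A - S) * g S)"

lemma submodD: "submodular_on N f \<Longrightarrow> A \<subseteq> N \<Longrightarrow> B \<subseteq> N \<Longrightarrow> f (A \<union> B) + f (A \<inter> B) \<le> f A + f B"
  unfolding submodular_on_def by blast

lemma EP_empty: "EP p {} g = g {}" by (simp add: EP_def)

lemma EP_insert: assumes "finite A" "a \<notin> A"
 shows "EP p (insert a A) g = p * EP p A (\<lambda>S. g (insert a S)) + (1-p) * EP p A g"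
proof -
  have disj: "Pow A \<inter> insert a ` Pow A = {}" using assms(2) by auto
  have inj: "inj_on (insert a) (Pow A)"
  proof (rule inj_onI)
    fix x y assume "x \<in> Pow A" "y \<in> Pow A" "insert a x = insert a y"
    then have "insert a x - {a} = insert a y - {a}" "a \<notin> x" "a \<notin> y" using assms(2) by auto
    then show "x = y" by simp
  qed
  have e1: "EP p (insert a A) g = (\<Sum>S\<in>Pow A. p ^ card S * (1-p) ^ card (insert a A - S) * g S)
     + (\<Sum>S\<in>insert a ` Pow A. p ^ card S * (1-p) ^ card (insert a A - S) * g S)"
    unfolding EP_def Pow_insert by (rule sum.union_disjoint) (use disj assms(1) in auto)
  have e2: "(\<Sum>S\<in>Pow A. p ^ card S * (1-p) ^ card (insert a A - S) * g S) = (1-p) * EP p A g"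
    unfolding EP_def sum_distrib_left
  proof (rule sum.cong[OF refl])
    fix S assume "S \<in> Pow A"
    then have "insert a A - S = insert a (A - S)" using assms(2) by auto
    moreover have "finite (A - S)" using assms(1) by simp
    ultimately have "card (insert a A - S) = Suc (card (A - S))" using assms(2) by simp
    then show "p ^ card S * (1-p) ^ card (insert a A - S) * g S = (1-p) * (p ^ card S * (1-p) ^ card (A - S) * g S)" by simp
  qed
  have e3: "(\<Sum>S\<in>insert a ` Pow A. p ^ card S * (1-p) ^ card (insert a A - S) * g S) = p * EP p A (\<lambda>S. g (insert a S))"
    unfolding EP_def sum_distrib_left sum.reindex[OF inj] comp_def
  proof (rule sum.cong[OF refl])
    fix S assume S: "S \<in> Pow A"
    then have "insert a A - insert a S = A - S" using assms(2) by auto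
    moreover have "finite S" using S assms(1) finite_subset by blast
    moreover have "a \<notin> S" using S assms(2) by blast
    ultimately have "card (insert a S) = Suc (card S)" "insert a A - insert a S = A - S" by simp_all
    then show "p ^ card (insert a S) * (1-p) ^ card (insert a A - insert a S) * g (insert a S) = p * (p ^ card S * (1-p) ^ card (A - S) * g (insert a S))" by simp
  qed
  show ?thesis using e1 e2 e3 by simp
qed

lemma EP_mono: assumes "0 \<le> p" "p \<le> 1" "\<And>S. S \<subseteq> A \<Longrightarrow> g S \<le> h S"
  shows "EP p A g \<le> EP p A h"
  unfolding EP_def using assms by (intro sum_mono mult_left_mono) auto

lemma EP_diff: "EP p A (\<lambda>S. g S - h S) = EP p A g - EP p A h"
  unfolding EP_def by (simp add: right_diff_distrib sum_subtractf)

lemma EP_add: "EP p A (\<lambda>S. g S + h S) = EP p A g + EP p A h"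
  unfolding EP_def by (simp add: distrib_left sum.distrib)

lemma EP_cmult: "EP p A (\<lambda>S. c * g S) = c * EP p A g"
  unfolding EP_def by (simp add: sum_distrib_left mult_ac)

lemma EP_sum: "EP p A (\<lambda>S. \<Sum>u\<in>D. g u S) = (\<Sum>u\<in>D. EP p A (g u))"
  unfolding EP_def by (simp add: sum_distrib_left sum.swap[of _ D])

lemma EP_cong: "(\<And>S. S \<subseteq> A \<Longrightarrow> g S = h S) \<Longrightarrow> EP p A g = EP p A h"
  unfolding EP_def by (intro sum.cong) auto

lemma EP_line: assumes "finite A" "A \<subseteq> M" "submodular_on M h" "0\<le>p" "p\<le>1"
  shows "EP p A h \<ge> p * h A + (1-p) * h {}"
  using assms(1,2,3)
proof (induction A arbitrary: h rule: finite_induct)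
  case empty
  then show ?case by (simp add: EP_empty algebra_simps)
next
  case (insert a A h)
  have aM: "a \<in> M" using insert by auto
  have sub': "submodular_on M (\<lambda>S. h (insert a S))"
    unfolding submodular_on_def
  proof (intro allI impI)
    fix X Y assume "X \<subseteq> M" "Y \<subseteq> M"
    then have "h (insert a X \<union> insert a Y) + h (insert a X \<inter> insert a Y) \<le> h (insert a X) + h (insert a Y)"
      using submodD[OF insert(5), of "insert a X" "insert a Y"] insert(5) aM by auto
    moreover have "insert a X \<union> insert a Y = insert a (X \<union> Y)" "insert a X \<inter> insert a Y = insert a (X \<inter> Y)" by auto
    ultimately show "h (insert a (X \<union> Y)) + h (insert a (X \<inter> Y)) \<le> h (insert a X) + h (insert a Y)" by simp
  qed
  have IH1: "EP p A (\<lambda>S. h (insert a S)) \<ge> p * h (insert a A) + (1-p) * h {a}"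
    using insert.IH[OF _ sub'] insert(4) by auto
  have IH2: "EP p A h \<ge> p * h A + (1-p) * h {}"
    using insert.IH insert(4,5) by auto
  have sm: "h (insert a A) + h {} \<le> h {a} + h A"
  proof -
    have "h ({a} \<union> A) + h ({a} \<inter> A) \<le> h {a} + h A" using submodD[OF insert(5), of "{a}" A] insert(4) aM by auto
    moreover have "{a} \<inter> A = {}" using insert(2) by auto
    ultimately show ?thesis by simp
  qed
  have f1: "p * EP p A (\<lambda>S. h (insert a S)) \<ge> p * (p * h (insert a A) + (1-p) * h {a})"
    using IH1 assms(4) by (intro mult_left_mono) auto
  have f2: "(1-p) * EP p A h \<ge> (1-p) * (p * h A + (1-p) * h {})"
    using IH2 assms(5) by (intro mult_left_mono) auto
  have f3: "p*(1-p)*(h (insert a A) + h {}) \<le> p*(1-p)*(h {a} + h A)"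
    using sm assms(4,5) by (intro mult_left_mono) auto
  have "p * EP p A (\<lambda>S. h (insert a S)) + (1-p) * EP p A h \<ge> p * h (insert a A) + (1-p) * h {}"
    using f1 f2 f3 by (simp add: algebra_simps)
  then show ?case using EP_insert[OF insert(1,2)] by simp
qed

lemma EP_union: assumes "finite A" "finite B" "A \<inter> B = {}"
 shows "EP p (A \<union> B) g = EP p B (\<lambda>T. EP p A (\<lambda>R. g (R \<union> T)))"
  using assms(2,3)
proof (induction B arbitrary: g rule: finite_induct)
  case empty
  then show ?case by (simp add: EP_empty)
next
  case (insert a B g)
  have "A \<union> insert a B = insert a (A \<union> B)" by auto
  moreover have "a \<notin> A \<union> B" using insert by auto
  ultimately have "EP p (A \<union> insert a B) g = p * EP p (A \<union> B) (\<lambda>S. g (insert a S)) + (1-p) * EP p (A \<union> B) g"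
    using EP_insert[of "A \<union> B" a p g] assms(1) insert(1) by simp
  also have "\<dots> = p * EP p B (\<lambda>T. EP p A (\<lambda>R. g (insert a (R \<union> T)))) + (1-p) * EP p B (\<lambda>T. EP p A (\<lambda>R. g (R \<union> T)))"
    using insert.IH[of "\<lambda>S. g (insert a S)"] insert.IH[of g] insert(4) by auto
  also have "\<dots> = EP p (insert a B) (\<lambda>T. EP p A (\<lambda>R. g (R \<union> T)))"
    using EP_insert[OF insert(1,2)] by simp
  finally show ?case .
qed

lemma submod_marg: assumes "submodular_on N f" "S \<subseteq> N" "a \<in> N" "u \<in> N" "a \<noteq> u"
  shows "f (insert u (insert a S)) - f (insert a S) \<le> f (insert u S) - f S"
proof -
  have "f (insert a S \<union> insert u S) + f (insert a S \<inter> insert u S) \<le> f (insert a S) + f (insert u S)"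
    using submodD[OF assms(1), of "insert a S" "insert u S"] assms by auto
  moreover have "insert a S \<union> insert u S = insert u (insert a S)" "insert a S \<inter> insert u S = S" using assms(5) by auto
  ultimately show ?thesis by simp
qed

lemma submod_sum: assumes "submodular_on N f" "finite D" "S \<union> D \<subseteq> N"
  shows "f (S \<union> D) - f S \<le> (\<Sum>u\<in>D. f (insert u S) - f S)"
  using assms(2,3)
proof (induction D rule: finite_induct)
  case empty then show ?case by simp
next
  case (insert a D)
  have "f ((S \<union> D) \<union> insert a S) + f ((S \<union> D) \<inter> insert a S) \<le> f (S \<union> D) + f (insert a S)"
    using submodD[OF assms(1), of "S \<union> D" "insert a S"] insert(4) by auto
  moreover have "(S \<union> D) \<union> insert a S = S \<union> insert a D" "(S \<union> D) \<inter> insert a S = S" using insert(2) by auto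
  ultimately show ?case using insert by simp
qed

lemma submod_shift: assumes "submodular_on N g" "T \<subseteq> N"
  shows "submodular_on N (\<lambda>R. g (R \<union> T))"
  unfolding submodular_on_def
proof (intro allI impI)
  fix X Y assume "X \<subseteq> N" "Y \<subseteq> N"
  then have "g ((X \<union> T) \<union> (Y \<union> T)) + g ((X \<union> T) \<inter> (Y \<union> T)) \<le> g (X \<union> T) + g (Y \<union> T)"
    using submodD[OF assms(1), of "X \<union> T" "Y \<union> T"] assms by auto
  moreover have "(X \<union> T) \<union> (Y \<union> T) = (X \<union> Y) \<union> T" "(X \<union> T) \<inter> (Y \<union> T) = (X \<inter> Y) \<union> T" by auto
  ultimately show "g ((X \<union> Y) \<union> T) + g ((X \<inter> Y) \<union> T) \<le> g (X \<union> T) + g (Y \<union> T)" by simp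
qed

lemma EP_marg_mono: assumes "finite C" "C \<inter> A' = {}" "u \<notin> C" "A' \<union> C \<subseteq> N" "u \<in> N"
  "submodular_on N f" "finite A'" "0\<le>p" "p\<le>1"
  shows "EP p (A' \<union> C) (\<lambda>S. f (insert u S) - f S) \<le> EP p A' (\<lambda>S. f (insert u S) - f S)"
  using assms(1-4)
proof (induction C rule: finite_induct)
  case empty then show ?case by simp
next
  case (insert a C)
  have eq: "A' \<union> insert a C = insert a (A' \<union> C)" by auto
  have na: "a \<notin> A' \<union> C" using insert by auto
  have m1: "EP p (A' \<union> C) (\<lambda>S. f (insert u (insert a S)) - f (insert a S)) \<le> EP p (A' \<union> C) (\<lambda>S. f (insert u S) - f S)"
    by (rule EP_mono[OF assms(8,9)]) (rule submod_marg[OF assms(6)], use insert assms(5) in auto)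
  have IH: "EP p (A' \<union> C) (\<lambda>S. f (insert u S) - f S) \<le> EP p A' (\<lambda>S. f (insert u S) - f S)"
    using insert by auto
  have "EP p (A' \<union> insert a C) (\<lambda>S. f (insert u S) - f S) = p * EP p (A' \<union> C) (\<lambda>S. f (insert u (insert a S)) - f (insert a S)) + (1-p) * EP p (A' \<union> C) (\<lambda>S. f (insert u S) - f S)"
    unfolding eq using EP_insert[OF _ na] insert(1) assms(7) by simp
  also have "\<dots> \<le> p * EP p (A' \<union> C) (\<lambda>S. f (insert u S) - f S) + (1-p) * EP p (A' \<union> C) (\<lambda>S. f (insert u S) - f S)"
    using m1 assms(8) by (simp add: mult_left_mono)
  also have "\<dots> = EP p (A' \<union> C) (\<lambda>S. f (insert u S) - f S)" by (simp add: algebra_simps)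
  finally show ?case using IH by simp
qed


lemma ml_bridge: assumes "finite N" "A \<subseteq> N" "B \<subseteq> N" "A \<inter> B = {}"
  "\<forall>v\<in>N. x v = (if v \<in> A then p else if v \<in> B then 1 else 0)"
  shows "multilinear_ext N f x = EP p A (\<lambda>S. f (S \<union> B))"
proof -
  have xA: "\<And>v. v \<in> A \<Longrightarrow> x v = p" using assms(2,5) by auto
  have xB: "x v = 1" if v: "v \<in> B" for v
  proof -
    have "v \<in> N" "v \<notin> A" using v assms(3,4) by auto
    then show ?thesis using v assms(5) by simp
  qed
  have xO: "\<And>v. v \<in> N \<Longrightarrow> v \<notin> A \<Longrightarrow> v \<notin> B \<Longrightarrow> x v = 0" using assms(5) by auto
  let ?t = "\<lambda>S. f S * (\<Prod>u\<in>S. x u) * (\<Prod>u\<in>N - S. 1 - x u)"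
  have img: "(\<lambda>T. T \<union> B) ` Pow A \<subseteq> Pow N" using assms by auto
  have zero: "\<forall>S \<in> Pow N - (\<lambda>T. T \<union> B) ` Pow A. ?t S = 0"
  proof
    fix S assume S: "S \<in> Pow N - (\<lambda>T. T \<union> B) ` Pow A"
    hence SN: "S \<subseteq> N" by auto
    have finS: "finite S" by (rule finite_subset[OF SN assms(1)])
    have "(\<exists>v\<in>S. v \<notin> A \<union> B) \<or> (\<exists>v\<in>B. v \<notin> S)"
    proof (rule ccontr)
      assume "\<not> ?thesis" then have "S \<subseteq> A \<union> B" "B \<subseteq> S" by auto
      then have "S = (S - B) \<union> B" "S - B \<in> Pow A" by auto
      then show False using S by blast
    qed
    then show "?t S = 0"
    proof
      assume "\<exists>v\<in>S. v \<notin> A \<union> B" then obtain v where v: "v\<in>S" "v \<notin> A\<union>B" by blast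
      have vN: "v \<in> N" using v(1) SN by blast
      have xv: "x v = 0" using assms(5) vN v(2) by simp
      have "(\<Prod>u\<in>S. x u) = 0" using prod_zero_iff[OF finS, of x] v(1) xv by auto
      thus ?thesis by simp
    next
      assume "\<exists>v\<in>B. v \<notin> S" then obtain v where v: "v\<in>B" "v\<notin>S" by blast
      have vN: "v \<in> N" using v(1) assms(3) by blast
      have vA: "v \<notin> A" using v(1) assms(4) by blast
      have xv: "x v = 1" using assms(5) vN vA v(1) by simp
      have NS: "v \<in> N - S" using vN v(2) by blast
      have finNS: "finite (N - S)" using assms(1) by blast
      have "(\<Prod>u\<in>N - S. 1 - x u) = 0" using prod_zero_iff[OF finNS, of "\<lambda>u. 1 - x u"] NS xv by auto
      thus ?thesis by simp
    qed
  qed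
  have inj: "inj_on (\<lambda>T. T \<union> B) (Pow A)"
  proof (rule inj_onI)
    fix T1 T2 assume "T1 \<in> Pow A" "T2 \<in> Pow A" "T1 \<union> B = T2 \<union> B"
    then have "(T1 \<union> B) - B = (T2 \<union> B) - B" "T1 \<inter> B = {}" "T2 \<inter> B = {}" using assms(4) by auto
    then show "T1 = T2" by auto
  qed
  have "multilinear_ext N f x = sum ?t (Pow N)" by (simp add: multilinear_ext_def)
  also have "\<dots> = sum ?t ((\<lambda>T. T \<union> B) ` Pow A)"
    by (rule sum.mono_neutral_right) (use assms(1) img zero in auto)
  also have "\<dots> = sum (?t \<circ> (\<lambda>T. T \<union> B)) (Pow A)" by (rule sum.reindex[OF inj])
  also have "\<dots> = EP p A (\<lambda>S. f (S \<union> B))" unfolding EP_def comp_def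
  proof (rule sum.cong[OF refl])
    fix T assume "T \<in> Pow A"
    hence TA: "T \<subseteq> A" by auto
    have fA: "finite A" by (rule finite_subset[OF assms(2,1)])
    have fB: "finite B" by (rule finite_subset[OF assms(3,1)])
    have fT: "finite T" by (rule finite_subset[OF TA fA])
    note finA = fA fB fT
    have TB: "T \<inter> B = {}" using TA assms(4) by auto
    have q1: "(\<Prod>u\<in>T \<union> B. x u) = (\<Prod>u\<in>T. x u) * (\<Prod>u\<in>B. x u)"
      by (rule prod.union_disjoint) (use finA TB in auto)
    have q2: "(\<Prod>u\<in>T. x u) = (\<Prod>u\<in>T. p)" by (rule prod.cong) (use TA xA in auto)
    have q3: "(\<Prod>u\<in>B. x u) = (\<Prod>u\<in>B. 1)" by (rule prod.cong) (use xB in auto)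
    have p1: "(\<Prod>u\<in>T \<union> B. x u) = p ^ card T" using q1 q2 q3 by simp
    have NT: "N - (T \<union> B) = (A - T) \<union> (N - A - B)" using assms(2,4) TA by auto
    have r1: "(\<Prod>u\<in>N - (T \<union> B). 1 - x u) = (\<Prod>u\<in>A - T. 1 - x u) * (\<Prod>u\<in>N - A - B. 1 - x u)"
      unfolding NT by (rule prod.union_disjoint) (use assms(1) finA in auto)
    have r2: "(\<Prod>u\<in>A - T. 1 - x u) = (\<Prod>u\<in>A - T. 1 - p)" by (rule prod.cong) (use xA in auto)
    have r3: "(\<Prod>u\<in>N - A - B. 1 - x u) = (\<Prod>u\<in>N - A - B. 1)" by (rule prod.cong) (use xO in auto)
    have p2: "(\<Prod>u\<in>N - (T \<union> B). 1 - x u) = (1-p) ^ card (A - T)" using r1 r2 r3 by simp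
    show "?t (T \<union> B) = p ^ card T * (1-p) ^ card (A - T) * f (T \<union> B)" using p1 p2 by simp
  qed
  finally show ?thesis .
qed

definition indv :: "real \<Rightarrow> 'a set \<Rightarrow> 'a \<Rightarrow> real" where
  "indv p A = (\<lambda>v. if v \<in> A then p else 0)"

lemma fold_inv:
  assumes "finite N" "distinct xs" "set xs \<subseteq> N" "0<p" "p<1" "k>0"
  shows "(\<forall>v. 0 \<le> foldl (alg1_step N f k p c \<tau>) (\<lambda>_. 0) xs v) \<and> norm1 N (foldl (alg1_step N f k p c \<tau>) (\<lambda>_. 0) xs) \<le> real k \<and>
   (norm1 N (foldl (alg1_step N f k p c \<tau>) (\<lambda>_. 0) xs) < real k \<longrightarrow>
     (\<exists>A \<subseteq> set xs. foldl (alg1_step N f k p c \<tau>) (\<lambda>_. 0) xs = indv p A \<and>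
        (\<forall>u \<in> set xs - A. \<exists>A'\<subseteq>A. partialF N f (indv p A') u < c*\<tau>/real k)))"
  using assms(2,3)
proof (induction xs rule: rev_induct)
  case Nil
  have "(\<lambda>_. 0::real) = indv p {}" by (simp add: indv_def)
  then show ?case by (auto simp: norm1_def)
next
  case (snoc u xs)
  define x where "x = foldl (alg1_step N f k p c \<tau>) (\<lambda>_. 0) xs"
  have dx: "distinct xs" "u \<notin> set xs" "set xs \<subseteq> N" "u \<in> N" using snoc.prems by auto
  have IH: "(\<forall>v. 0 \<le> x v) \<and> norm1 N x \<le> real k \<and>
   (norm1 N x < real k \<longrightarrow> (\<exists>A \<subseteq> set xs. x = indv p A \<and>
        (\<forall>u \<in> set xs - A. \<exists>A'\<subseteq>A. partialF N f (indv p A') u < c*\<tau>/real k)))"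
    using snoc.IH[OF dx(1) dx(3)] unfolding x_def .
  have x0: "\<And>v. 0 \<le> x v" using IH by blast
  have nx: "norm1 N x = (\<Sum>v\<in>N. x v)" unfolding norm1_def by (intro sum.cong refl abs_of_nonneg x0)
  have fx: "foldl (alg1_step N f k p c \<tau>) (\<lambda>_. 0) (xs @ [u]) = alg1_step N f k p c \<tau> x u"
    by (simp add: x_def)
  show ?case
  proof (cases "c * \<tau> / real k \<le> partialF N f x u")
    case True
    define m where "m = min p (real k - norm1 N x)"
    have nk: "norm1 N x \<le> real k" using IH by blast
    have m0: "0 \<le> m" unfolding m_def using nk assms(4) by simp
    have x': "alg1_step N f k p c \<tau> x u = (\<lambda>v. x v + m * charvec {u} v)"
      using True by (simp add: alg1_step_def m_def)
    have nn: "\<forall>v. 0 \<le> x v + m * charvec {u} v"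
    proof
      fix v have "0 \<le> charvec {u} v" by (simp add: charvec_def)
      then show "0 \<le> x v + m * charvec {u} v" using x0[of v] m0 by simp
    qed
    have "norm1 N (\<lambda>v. x v + m * charvec {u} v) = (\<Sum>v\<in>N. x v + m * charvec {u} v)"
      unfolding norm1_def by (intro sum.cong refl abs_of_nonneg) (use nn in blast)
    also have "\<dots> = norm1 N x + m * (\<Sum>v\<in>N. charvec {u} v)"
      by (simp add: sum.distrib sum_distrib_left nx)
    also have "(\<Sum>v\<in>N. charvec {u} v) = 1" using dx(4) assms(1) by (simp add: charvec_def)
    finally have n': "norm1 N (\<lambda>v. x v + m * charvec {u} v) = norm1 N x + m" by simp
    have le: "norm1 N x + m \<le> real k" by (simp add: m_def)
    have last: "norm1 N x + m < real k \<longrightarrow> (\<exists>A \<subseteq> set (xs @ [u]). (\<lambda>v. x v + m * charvec {u} v) = indv p A \<and>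
        (\<forall>w \<in> set (xs @ [u]) - A. \<exists>A'\<subseteq>A. partialF N f (indv p A') w < c*\<tau>/real k))"
    proof
      assume lt: "norm1 N x + m < real k"
      then have "norm1 N x < real k" using m0 by simp
      then obtain A where A: "A \<subseteq> set xs" "x = indv p A"
        "\<forall>w \<in> set xs - A. \<exists>A'\<subseteq>A. partialF N f (indv p A') w < c*\<tau>/real k" using IH by blast
      have mp: "m = p"
      proof (cases "p \<le> real k - norm1 N x")
        case True then show ?thesis by (simp add: m_def)
      next
        case False then show ?thesis using lt by (simp add: m_def)
      qed
      have uA: "u \<notin> A" using A(1) dx(2) by auto
      have "(\<lambda>v. x v + m * charvec {u} v) = indv p (insert u A)"
        using uA by (auto simp: A(2) mp indv_def charvec_def)
      moreover have "insert u A \<subseteq> set (xs @ [u])" using A(1) by auto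
      moreover have "\<forall>w \<in> set (xs @ [u]) - insert u A. \<exists>A'\<subseteq>insert u A. partialF N f (indv p A') w < c*\<tau>/real k"
      proof
        fix w assume w: "w \<in> set (xs @ [u]) - insert u A"
        then have "w \<in> set xs - A" by auto
        then obtain A' where "A' \<subseteq> A" "partialF N f (indv p A') w < c*\<tau>/real k" using A(3) by blast
        moreover have "A' \<subseteq> insert u A" using \<open>A' \<subseteq> A\<close> by blast
        ultimately show "\<exists>A'\<subseteq>insert u A. partialF N f (indv p A') w < c*\<tau>/real k" by blast
      qed
      ultimately show "\<exists>A \<subseteq> set (xs @ [u]). (\<lambda>v. x v + m * charvec {u} v) = indv p A \<and>
        (\<forall>w \<in> set (xs @ [u]) - A. \<exists>A'\<subseteq>A. partialF N f (indv p A') w < c*\<tau>/real k)" by blast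
    qed
    show ?thesis unfolding fx x' n' using nn le last by blast
  next
    case False
    have x': "alg1_step N f k p c \<tau> x u = x" using False by (simp add: alg1_step_def)
    have last: "norm1 N x < real k \<longrightarrow> (\<exists>A \<subseteq> set (xs @ [u]). x = indv p A \<and>
        (\<forall>w \<in> set (xs @ [u]) - A. \<exists>A'\<subseteq>A. partialF N f (indv p A') w < c*\<tau>/real k))"
    proof
      assume "norm1 N x < real k"
      then obtain A where A: "A \<subseteq> set xs" "x = indv p A"
        "\<forall>w \<in> set xs - A. \<exists>A'\<subseteq>A. partialF N f (indv p A') w < c*\<tau>/real k" using IH by blast
      have "partialF N f (indv p A) u < c*\<tau>/real k" using False A(2) by simp
      then have "\<forall>w \<in> set (xs @ [u]) - A. \<exists>A'\<subseteq>A. partialF N f (indv p A') w < c*\<tau>/real k"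
        using A(3) by auto
      then show "\<exists>A \<subseteq> set (xs @ [u]). x = indv p A \<and>
        (\<forall>w \<in> set (xs @ [u]) - A. \<exists>A'\<subseteq>A. partialF N f (indv p A') w < c*\<tau>/real k)"
        using A(1,2) by auto
    qed
    show ?thesis unfolding fx x' using IH last by blast
  qed
qed


theorem corollary3p6:
  fixes N :: "'a set" and f :: "'a set \<Rightarrow> real" and k :: nat
    and p c \<tau> :: real and \<sigma> :: "'a list" and OPT :: "'a set"
  assumes "finite N"
    and "distinct \<sigma>" and "set \<sigma> = N"
    and "nonneg_on N f" and "submodular_on N f"
    and "k > 0"
    and "0 < p" and "p < 1" and "c > 0" and "\<tau> \<ge> 0"
    and "OPT \<subseteq> N" and "card OPT \<le> k"
    and "\<forall>S. S \<subseteq> N \<and> card S \<le> k \<longrightarrow> f S \<le> f OPT"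
    and "norm1 N (alg1_final N f k p c \<tau> \<sigma>) < real k"
  shows "multilinear_ext N f (alg1_final N f k p c \<tau> \<sigma>)
           \<ge> (1 - p) * (p * f OPT + (1 - p) * f (OPT - supp N (alg1_final N f k p c \<tau> \<sigma>)))
             - c * \<tau>"
proof -
  note fin = assms(1) and sub = assms(5) and p0 = assms(7) and p1 = assms(8)
  define xh where "xh = alg1_final N f k p c \<tau> \<sigma>"
  have inv: "norm1 N xh < real k \<longrightarrow> (\<exists>A \<subseteq> set \<sigma>. xh = indv p A \<and>
        (\<forall>u \<in> set \<sigma> - A. \<exists>A'\<subseteq>A. partialF N f (indv p A') u < c*\<tau>/real k))"
    using fold_inv[OF assms(1,2), of p k f c \<tau>] assms(3,6,7,8) unfolding xh_def alg1_final_def by blast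
  obtain A where A: "A \<subseteq> N" "xh = indv p A"
     "\<forall>u \<in> N - A. \<exists>A'\<subseteq>A. partialF N f (indv p A') u < c*\<tau>/real k"
    using inv assms(14) assms(3) unfolding xh_def by auto
  have fA: "finite A" by (rule finite_subset[OF A(1) fin])
  have suppA: "supp N xh = A" using A(1,2) p0 by (auto simp: supp_def indv_def)
  define D where "D = OPT - A"
  have fOPT: "finite OPT" by (rule finite_subset[OF assms(11) fin])
  have fD: "finite D" unfolding D_def using fOPT by simp
  define marg where "marg = (\<lambda>u S. f (insert u S) - f S)"
  have FA: "multilinear_ext N f xh = EP p A f"
  proof -
    have "multilinear_ext N f xh = EP p A (\<lambda>S. f (S \<union> {}))"
      by (rule ml_bridge) (use fin A(1,2) in \<open>auto simp: indv_def\<close>)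
    then show ?thesis by simp
  qed
  have pF: "partialF N f (indv p A') u = EP p A' (marg u)"
    if A'A: "A' \<subseteq> A" and u: "u \<in> N" "u \<notin> A" for A' u
  proof -
    have A'N: "A' \<subseteq> N" using A'A A(1) by blast
    have uA': "u \<notin> A'" using A'A u by blast
    have e1: "multilinear_ext N f (\<lambda>v. max (indv p A' v) (charvec {u} v)) = EP p A' (\<lambda>S. f (S \<union> {u}))"
      by (rule ml_bridge) (use fin A'N u uA' p0 in \<open>auto simp: indv_def charvec_def\<close>)
    have e2: "multilinear_ext N f (\<lambda>v. min (indv p A' v) (charvec (N - {u}) v)) = EP p A' (\<lambda>S. f (S \<union> {}))"
      by (rule ml_bridge) (use fin A'N u uA' p0 p1 in \<open>auto simp: indv_def charvec_def\<close>)
    show ?thesis unfolding partialF_def e1 e2 marg_def EP_diff[symmetric] by simp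
  qed
  have mu: "EP p A (marg u) \<le> c*\<tau>/real k" if u: "u \<in> D" for u
  proof -
    have uN: "u \<in> N - A" using u assms(11) unfolding D_def by blast
    obtain A' where A': "A' \<subseteq> A" "partialF N f (indv p A') u < c*\<tau>/real k" using A(3) uN by blast
    have fA': "finite A'" by (rule finite_subset[OF A'(1) fA])
    have eqA: "A' \<union> (A - A') = A" using A'(1) by blast
    have "EP p (A' \<union> (A - A')) (marg u) \<le> EP p A' (marg u)"
      unfolding marg_def
      by (rule EP_marg_mono[OF _ _ _ _ _ sub fA']) (use fA uN A(1) eqA p0 p1 in auto)
    then have "EP p A (marg u) \<le> EP p A' (marg u)" unfolding eqA .
    moreover have "EP p A' (marg u) < c*\<tau>/real k" using A'(2) pF[OF A'(1)] uN by simp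
    ultimately show ?thesis by simp
  qed
  have cardD: "real (card D) \<le> real k"
  proof -
    have "card D \<le> card OPT" unfolding D_def by (rule card_mono[OF fOPT]) blast
    then show ?thesis using assms(12) by simp
  qed
  have ct: "0 \<le> c*\<tau>/real k" using assms(9,10) by simp
  have sumD: "(\<Sum>u\<in>D. EP p A (marg u)) \<le> c * \<tau>"
  proof -
    have "(\<Sum>u\<in>D. EP p A (marg u)) \<le> (\<Sum>u\<in>D. c*\<tau>/real k)" by (rule sum_mono) (rule mu)
    also have "\<dots> = real (card D) * (c*\<tau>/real k)" by simp
    also have "\<dots> \<le> real k * (c*\<tau>/real k)" by (rule mult_right_mono[OF cardD ct])
    also have "\<dots> = c * \<tau>" using assms(6) by simp
    finally show ?thesis .
  qed
  define h where "h = (\<lambda>S. f (S \<union> D))"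
  have DN: "D \<subseteq> N" unfolding D_def using assms(11) by blast
  have upper: "EP p A h - EP p A f \<le> c * \<tau>"
  proof -
    have "EP p A h - EP p A f = EP p A (\<lambda>S. h S - f S)" by (rule EP_diff[symmetric])
    also have "\<dots> \<le> EP p A (\<lambda>S. \<Sum>u\<in>D. marg u S)"
    proof (rule EP_mono)
      fix S assume "S \<subseteq> A"
      then have "S \<union> D \<subseteq> N" using A(1) DN by blast
      then show "h S - f S \<le> (\<Sum>u\<in>D. marg u S)" unfolding h_def marg_def by (rule submod_sum[OF sub fD])
    qed (use p0 p1 in auto)
    also have "\<dots> = (\<Sum>u\<in>D. EP p A (marg u))" by (rule EP_sum)
    finally show ?thesis using sumD by simp
  qed
  define A1 where "A1 = A \<inter> OPT"
  define A2 where "A2 = A - OPT"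
  have A12: "A = A1 \<union> A2" "A1 \<inter> A2 = {}" unfolding A1_def A2_def by auto
  have fA1: "finite A1" "finite A2" unfolding A1_def A2_def using fA by auto
  have subh: "submodular_on N h" unfolding h_def by (rule submod_shift[OF sub DN])
  have hnn: "0 \<le> h S" if "S \<subseteq> A" for S
  proof -
    have "S \<union> D \<subseteq> N" using that A(1) DN by blast
    then show ?thesis using assms(4) unfolding h_def nonneg_on_def by simp
  qed
  have lower: "EP p A h \<ge> p * (p * h (A1 \<union> A2) + (1-p) * h A1) + (1-p) * (p * h A2 + (1-p) * h {})"
  proof -
    have "EP p A h = EP p A2 (\<lambda>T. EP p A1 (\<lambda>R. h (R \<union> T)))"
      unfolding A12(1) by (rule EP_union[OF fA1 A12(2)])
    also have "\<dots> \<ge> EP p A2 (\<lambda>T. p * h (A1 \<union> T) + (1-p) * h T)"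
    proof (rule EP_mono)
      fix T assume T: "T \<subseteq> A2"
      then have TN: "T \<subseteq> N" using A12 A(1) by blast
      have "EP p A1 (\<lambda>R. h (R \<union> T)) \<ge> p * h (A1 \<union> T) + (1-p) * h ({} \<union> T)"
        by (rule EP_line[OF fA1(1) _ submod_shift[OF subh TN]]) (use A12 A(1) p0 p1 in auto)
      then show "p * h (A1 \<union> T) + (1-p) * h T \<le> EP p A1 (\<lambda>R. h (R \<union> T))" by simp
    qed (use p0 p1 in auto)
    finally have s1: "EP p A h \<ge> EP p A2 (\<lambda>T. p * h (A1 \<union> T) + (1-p) * h T)" .
    have s2: "EP p A2 (\<lambda>T. p * h (A1 \<union> T) + (1-p) * h T) = p * EP p A2 (\<lambda>T. h (T \<union> A1)) + (1-p) * EP p A2 h"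
      by (simp add: EP_add EP_cmult Un_commute)
    have A2N: "A2 \<subseteq> N" using A12 A(1) by blast
    have A1N: "A1 \<subseteq> N" using A12 A(1) by blast
    have l1: "EP p A2 (\<lambda>T. h (T \<union> A1)) \<ge> p * h (A2 \<union> A1) + (1-p) * h ({} \<union> A1)"
      by (rule EP_line[OF fA1(2) A2N submod_shift[OF subh A1N]]) (use p0 p1 in auto)
    have l2: "EP p A2 h \<ge> p * h A2 + (1-p) * h {}"
      by (rule EP_line[OF fA1(2) A2N subh]) (use p0 p1 in auto)
    have m1: "p * EP p A2 (\<lambda>T. h (T \<union> A1)) \<ge> p * (p * h (A1 \<union> A2) + (1-p) * h A1)"
      using l1 p0 by (intro mult_left_mono) (auto simp: Un_commute)
    have m2: "(1-p) * EP p A2 h \<ge> (1-p) * (p * h A2 + (1-p) * h {})"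
      using l2 p1 by (intro mult_left_mono) auto
    show ?thesis using s1 s2 m1 m2 by simp
  qed
  have h12: "0 \<le> h (A1 \<union> A2)" "0 \<le> h A2" using hnn A12 by auto
  have hA1: "h A1 = f OPT" unfolding h_def A1_def D_def
  proof -
    have "A \<inter> OPT \<union> (OPT - A) = OPT" by blast
    then show "f (A \<inter> OPT \<union> (OPT - A)) = f OPT" by simp
  qed
  have h0: "h {} = f D" unfolding h_def by simp
  have t1: "0 \<le> p * (p * h (A1 \<union> A2))" using h12 p0 by simp
  have t2: "0 \<le> (1-p) * (p * h A2)" using h12 p0 p1 by simp
  have fin_ineq: "EP p A f \<ge> (1 - p) * (p * f OPT + (1 - p) * f D) - c * \<tau>"
    using lower upper t1 t2 hA1 h0 by (simp add: algebra_simps)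
  show ?thesis using fin_ineq FA suppA unfolding xh_def[symmetric] D_def by simp
qed

end
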